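(* Let $(H,\cdot,1,\Delta,\varepsilon,\lhd)$ be a left Post-Hopf algebra, and suppose that $\Delta$ is cocommutative or that $H$ is connected as a coalgebra. Then $(H,\cdot^{\mathrm{op}},1,\Delta^{\mathrm{cop}},\varepsilon,\lhd^{\mathrm{op}})$ is a right Post-Hopf algebra, where $x\cdot^{\mathrm{op}}y=y\cdot x$, $x\lhd^{\mathrm{op}}y=y\lhd x$ and $\Delta^{\mathrm{cop}}=\tau\circ\Delta$ with $\tau(a\otimes b)=b\otimes a$.
   Context: Sweedler notation $\Delta(x)=x^{(1)}\otimes x^{(2)}$. The convolution algebra $\mathrm{Hom}(H,\mathrm{End}(H))$ (relative to the coproduct in use) has product $(f\star g)(x)=f(x^{(1)})\circ g(x^{(2)})$ and unit $x\mapsto\varepsilon(x)\mathrm{Id}_H$. A left Post-Hopf algebra is a Hopf algebra with a coalgebra morphism $\lhd:H\otimes H\to H$ such that $x\lhd(y\cdot z)=(x^{(1)}\lhd y)\cdot(x^{(2)}\lhd z)$, $x\lhd(y\lhd z)=\big(x^{(1)}\cdot(x^{(2)}\lhd y)\big)\lhd z$, and $\alpha_\lhd(x)(y)=x\lhd y$ defines an invertible element of the convolution algebra. A right Post-Hopf algebra is a Hopf algebra with a coalgebra morphism $\rhd:H\otimes H\to H$ such that $(x\cdot y)\rhd z=(x\rhd z^{(1)})\cdot(y\rhd z^{(2)})$, $(x\rhd y)\rhd z=x\rhd\big((y\rhd z^{(1)})\cdot z^{(2)}\big)$, and $\gamma_\rhd(x)(y)=y\rhd x$ defines an invertible element of the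 convolution algebra. Connectedness: with $\rho(x)=x-\varepsilon(x)1$, $\tilde\Delta(x)=\Delta(x)-1\otimes x-x\otimes 1$ on $\ker\varepsilon$, $\tilde\Delta(1)=0$, $\tilde\Delta^{(0)}=\rho$, $\tilde\Delta^{(k)}=(\tilde\Delta\otimes\mathrm{Id}^{\otimes k-1})\circ\tilde\Delta^{(k-1)}$, $H$ is connected as a coalgebra if every $x$ satisfies $\tilde\Delta^{(n)}(x)=0$ for some $n$. *)

theory Defs
  imports Main "HOL.Vector_Spaces"
begin

text \<open>
  An element of the n-fold tensor power of H is
  represented by a formal sum of pure tensors, i.e. a list of lists of length n
  (the inner list [v1,...,vn] stands for v1 (x) ... (x) vn; scalars are absorbed in
  the first factor).  Two such formal sums denote the same tensor iff they agree on
  every multilinear form (classical definition of the tensor product as the span of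
  the evaluation functionals in the dual of the space of multilinear forms).
\<close>

definition multilinear_form ::
  "('k::field \<Rightarrow> 'h::ab_group_add \<Rightarrow> 'h) \<Rightarrow> nat \<Rightarrow> ('h list \<Rightarrow> 'k) \<Rightarrow> bool" where
  "multilinear_form sc n F \<longleftrightarrow>
     (\<forall>xs i a b c. length xs = n \<longrightarrow> i < n \<longrightarrow>
        F (xs[i := a + b]) = F (xs[i := a]) + F (xs[i := b]) \<and>
        F (xs[i := sc c a]) = c * F (xs[i := a]))"

definition tensor_eq ::
  "('k::field \<Rightarrow> 'h::ab_group_add \<Rightarrow> 'h) \<Rightarrow> nat \<Rightarrow> 'h list list \<Rightarrow> 'h list list \<Rightarrow> bool" where
  "tensor_eq sc n t s \<longleftrightarrow>
     (\<forall>F. multilinear_form sc n F \<longrightarrow> sum_list (map F t) = sum_list (map F s))"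

text \<open>Apply a map f : H -> H (x) H at tensor position i (i.e. Id^i (x) f (x) Id^...).\<close>
definition tensor_at :: "nat \<Rightarrow> ('h \<Rightarrow> 'h list list) \<Rightarrow> 'h list list \<Rightarrow> 'h list list" where
  "tensor_at i f t = concat (map (\<lambda>p. map (\<lambda>q. take i p @ q @ drop (Suc i) p) (f (p ! i))) t)"

text \<open>(m (x) m) o (Id (x) tau (x) Id) applied to t (x) s, for t, s in H (x) H.\<close>
definition tensor_mult :: "('h \<Rightarrow> 'h \<Rightarrow> 'h) \<Rightarrow> 'h list list \<Rightarrow> 'h list list \<Rightarrow> 'h list list" where
  "tensor_mult m t s = concat (map (\<lambda>p. map (\<lambda>q. [m (p!0) (q!0), m (p!1) (q!1)]) s) t)"

definition bilinear_map :: "('k::field \<Rightarrow> 'h::ab_group_add \<Rightarrow> 'h) \<Rightarrow> ('h \<Rightarrow> 'h \<Rightarrow> 'h) \<Rightarrow> bool" where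
  "bilinear_map sc f \<longleftrightarrow>
     (\<forall>x. Vector_Spaces.linear sc sc (f x)) \<and> (\<forall>y. Vector_Spaces.linear sc sc (\<lambda>x. f x y))"

definition coproduct_map :: "('k::field \<Rightarrow> 'h::ab_group_add \<Rightarrow> 'h) \<Rightarrow> ('h \<Rightarrow> 'h list list) \<Rightarrow> bool" where
  "coproduct_map sc \<Delta> \<longleftrightarrow>
     (\<forall>x. \<forall>p\<in>set (\<Delta> x). length p = 2) \<and>
     (\<forall>x y. tensor_eq sc 2 (\<Delta> (x + y)) (\<Delta> x @ \<Delta> y)) \<and>
     (\<forall>c x. tensor_eq sc 2 (\<Delta> (sc c x)) (map (\<lambda>p. [sc c (p!0), p!1]) (\<Delta> x)))"

definition bialgebra ::
  "('k::field \<Rightarrow> 'h::ab_group_add \<Rightarrow> 'h) \<Rightarrow> ('h \<Rightarrow> 'h \<Rightarrow> 'h) \<Rightarrow> 'h \<Rightarrow> ('h \<Rightarrow> 'h list list)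
    \<Rightarrow> ('h \<Rightarrow> 'k) \<Rightarrow> bool" where
  "bialgebra sc m one \<Delta> \<epsilon> \<longleftrightarrow>
     vector_space sc \<and> bilinear_map sc m \<and>
     (\<forall>x y z. m (m x y) z = m x (m y z)) \<and> (\<forall>x. m one x = x \<and> m x one = x) \<and>
     coproduct_map sc \<Delta> \<and> Vector_Spaces.linear sc (*) \<epsilon> \<and>
     (\<forall>x. tensor_eq sc 3 (tensor_at 0 \<Delta> (\<Delta> x)) (tensor_at 1 \<Delta> (\<Delta> x))) \<and>
     (\<forall>x. sum_list (map (\<lambda>p. sc (\<epsilon> (p!0)) (p!1)) (\<Delta> x)) = x \<and>
          sum_list (map (\<lambda>p. sc (\<epsilon> (p!1)) (p!0)) (\<Delta> x)) = x) \<and>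
     (\<forall>x y. tensor_eq sc 2 (\<Delta> (m x y)) (tensor_mult m (\<Delta> x) (\<Delta> y))) \<and>
     tensor_eq sc 2 (\<Delta> one) [[one, one]] \<and>
     (\<forall>x y. \<epsilon> (m x y) = \<epsilon> x * \<epsilon> y) \<and> \<epsilon> one = 1"

definition hopf_algebra ::
  "('k::field \<Rightarrow> 'h::ab_group_add \<Rightarrow> 'h) \<Rightarrow> ('h \<Rightarrow> 'h \<Rightarrow> 'h) \<Rightarrow> 'h \<Rightarrow> ('h \<Rightarrow> 'h list list)
    \<Rightarrow> ('h \<Rightarrow> 'k) \<Rightarrow> bool" where
  "hopf_algebra sc m one \<Delta> \<epsilon> \<longleftrightarrow>
     bialgebra sc m one \<Delta> \<epsilon> \<and>
     (\<exists>S. Vector_Spaces.linear sc sc S \<and>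
          (\<forall>x. sum_list (map (\<lambda>p. m (S (p!0)) (p!1)) (\<Delta> x)) = sc (\<epsilon> x) one \<and>
               sum_list (map (\<lambda>p. m (p!0) (S (p!1))) (\<Delta> x)) = sc (\<epsilon> x) one))"

text \<open>A linear map H (x) H -> H (given as a bilinear map) is a coalgebra morphism,
  where H (x) H carries the coproduct (Id (x) tau (x) Id) o (Delta (x) Delta) and counit eps (x) eps.\<close>
definition coalgebra_morphism2 ::
  "('k::field \<Rightarrow> 'h::ab_group_add \<Rightarrow> 'h) \<Rightarrow> ('h \<Rightarrow> 'h list list) \<Rightarrow> ('h \<Rightarrow> 'k)
    \<Rightarrow> ('h \<Rightarrow> 'h \<Rightarrow> 'h) \<Rightarrow> bool" where
  "coalgebra_morphism2 sc \<Delta> \<epsilon> f \<longleftrightarrow>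
     bilinear_map sc f \<and>
     (\<forall>x y. tensor_eq sc 2 (\<Delta> (f x y)) (tensor_mult f (\<Delta> x) (\<Delta> y))) \<and>
     (\<forall>x y. \<epsilon> (f x y) = \<epsilon> x * \<epsilon> y)"

text \<open>Convolution in Hom(H, End(H)): (f * g)(x) = f(x1) o g(x2).\<close>
definition conv :: "('h \<Rightarrow> 'h list list) \<Rightarrow> ('h \<Rightarrow> 'h \<Rightarrow> 'h) \<Rightarrow> ('h \<Rightarrow> 'h \<Rightarrow> 'h) \<Rightarrow> 'h \<Rightarrow> 'h \<Rightarrow> 'h::ab_group_add" where
  "conv \<Delta> f g x = (\<lambda>y. sum_list (map (\<lambda>p. f (p!0) (g (p!1) y)) (\<Delta> x)))"

text \<open>Elements of Hom(H, End(H)) are exactly the maps f with f linear and each f x linear,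
  i.e. bilinear maps; the unit is x |-> eps(x) Id.\<close>
definition conv_invertible ::
  "('k::field \<Rightarrow> 'h::ab_group_add \<Rightarrow> 'h) \<Rightarrow> ('h \<Rightarrow> 'h list list) \<Rightarrow> ('h \<Rightarrow> 'k)
    \<Rightarrow> ('h \<Rightarrow> 'h \<Rightarrow> 'h) \<Rightarrow> bool" where
  "conv_invertible sc \<Delta> \<epsilon> f \<longleftrightarrow>
     bilinear_map sc f \<and>
     (\<exists>g. bilinear_map sc g \<and>
          (\<forall>x. conv \<Delta> f g x = (\<lambda>y. sc (\<epsilon> x) y)) \<and>
          (\<forall>x. conv \<Delta> g f x = (\<lambda>y. sc (\<epsilon> x) y)))"

definition left_post_hopf ::
  "('k::field \<Rightarrow> 'h::ab_group_add \<Rightarrow> 'h) \<Rightarrow> ('h \<Rightarrow> 'h \<Rightarrow> 'h) \<Rightarrow> 'h \<Rightarrow> ('h \<Rightarrow> 'h list list)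
    \<Rightarrow> ('h \<Rightarrow> 'k) \<Rightarrow> ('h \<Rightarrow> 'h \<Rightarrow> 'h) \<Rightarrow> bool" where
  "left_post_hopf sc m one \<Delta> \<epsilon> tri \<longleftrightarrow>
     hopf_algebra sc m one \<Delta> \<epsilon> \<and> coalgebra_morphism2 sc \<Delta> \<epsilon> tri \<and>
     (\<forall>x y z. tri x (m y z) = sum_list (map (\<lambda>p. m (tri (p!0) y) (tri (p!1) z)) (\<Delta> x))) \<and>
     (\<forall>x y z. tri x (tri y z) = tri (sum_list (map (\<lambda>p. m (p!0) (tri (p!1) y)) (\<Delta> x))) z) \<and>
     conv_invertible sc \<Delta> \<epsilon> (\<lambda>x y. tri x y)"

definition right_post_hopf ::
  "('k::field \<Rightarrow> 'h::ab_group_add \<Rightarrow> 'h) \<Rightarrow> ('h \<Rightarrow> 'h \<Rightarrow> 'h) \<Rightarrow> 'h \<Rightarrow> ('h \<Rightarrow> 'h list list)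
    \<Rightarrow> ('h \<Rightarrow> 'k) \<Rightarrow> ('h \<Rightarrow> 'h \<Rightarrow> 'h) \<Rightarrow> bool" where
  "right_post_hopf sc m one \<Delta> \<epsilon> rtri \<longleftrightarrow>
     hopf_algebra sc m one \<Delta> \<epsilon> \<and> coalgebra_morphism2 sc \<Delta> \<epsilon> rtri \<and>
     (\<forall>x y z. rtri (m x y) z = sum_list (map (\<lambda>p. m (rtri x (p!0)) (rtri y (p!1))) (\<Delta> z))) \<and>
     (\<forall>x y z. rtri (rtri x y) z = rtri x (sum_list (map (\<lambda>p. m (rtri y (p!0)) (p!1)) (\<Delta> z)))) \<and>
     conv_invertible sc \<Delta> \<epsilon> (\<lambda>x y. rtri y x)"

definition cocommutative :: "('k::field \<Rightarrow> 'h::ab_group_add \<Rightarrow> 'h) \<Rightarrow> ('h \<Rightarrow> 'h list list) \<Rightarrow> bool" where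
  "cocommutative sc \<Delta> \<longleftrightarrow> (\<forall>x. tensor_eq sc 2 (map rev (\<Delta> x)) (\<Delta> x))"

definition rho :: "('k \<Rightarrow> 'h \<Rightarrow> 'h) \<Rightarrow> 'h \<Rightarrow> ('h \<Rightarrow> 'k) \<Rightarrow> 'h \<Rightarrow> 'h::ab_group_add" where
  "rho sc one \<epsilon> x = x - sc (\<epsilon> x) one"

text \<open>Reduced coproduct, extended linearly from ker eps and 1 (so reduced(x) = reduced(rho x)).\<close>
definition reduced_coproduct ::
  "('k \<Rightarrow> 'h \<Rightarrow> 'h) \<Rightarrow> 'h \<Rightarrow> ('h \<Rightarrow> 'h list list) \<Rightarrow> ('h \<Rightarrow> 'k) \<Rightarrow> 'h \<Rightarrow> 'h::ab_group_add list list" where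
  "reduced_coproduct sc one \<Delta> \<epsilon> x =
     (let r = rho sc one \<epsilon> x in \<Delta> r @ [[- one, r], [- r, one]])"

fun reduced_iter ::
  "('k \<Rightarrow> 'h \<Rightarrow> 'h) \<Rightarrow> 'h \<Rightarrow> ('h \<Rightarrow> 'h list list) \<Rightarrow> ('h \<Rightarrow> 'k) \<Rightarrow> nat \<Rightarrow> 'h \<Rightarrow> 'h::ab_group_add list list" where
  "reduced_iter sc one \<Delta> \<epsilon> 0 x = [[rho sc one \<epsilon> x]]"
| "reduced_iter sc one \<Delta> \<epsilon> (Suc k) x =
     tensor_at 0 (reduced_coproduct sc one \<Delta> \<epsilon>) (reduced_iter sc one \<Delta> \<epsilon> k x)"

definition connected_coalgebra ::
  "('k::field \<Rightarrow> 'h::ab_group_add \<Rightarrow> 'h) \<Rightarrow> 'h \<Rightarrow> ('h \<Rightarrow> 'h list list) \<Rightarrow> ('h \<Rightarrow> 'k) \<Rightarrow> bool" where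
  "connected_coalgebra sc one \<Delta> \<epsilon> \<longleftrightarrow>
     (\<forall>x. \<exists>n. tensor_eq sc (Suc n) (reduced_iter sc one \<Delta> \<epsilon> n x) [])"

end

theory Submission
  imports Defs
begin


lemma vs_field: "vector_space ((*) :: 'k::field \<Rightarrow> 'k \<Rightarrow> 'k)"
  by (unfold_locales) (auto simp: algebra_simps)

lemma sep:
  fixes sc :: "'k::field \<Rightarrow> 'h::ab_group_add \<Rightarrow> 'h"
  assumes vs: "vector_space sc"
    and h: "\<And>\<phi>. Vector_Spaces.linear sc (*) \<phi> \<Longrightarrow> \<phi> u = \<phi> v"
  shows "u = v"
proof (rule ccontr)
  assume ne: "u \<noteq> v"
  interpret vp: vector_space_pair sc "(*) :: 'k \<Rightarrow> 'k \<Rightarrow> 'k"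
    using vs vs_field by (simp add: vector_space_pair_def)
  have "vp.vs1.independent {u - v}"
    using ne by (intro vp.vs1.independent_insertI) (auto simp: vp.vs1.span_empty vp.vs1.independent_empty)
  then obtain g where g: "Vector_Spaces.linear sc (*) g" "g (u - v) = 1"
    using vp.linear_independent_extend[of "{u-v}" "\<lambda>_. 1"] by auto
  have "g (u - v) = g u - g v" using vp.linear_diff[OF g(1)] .
  then show False using h[OF g(1)] g(2) by simp
qed

lemma additive_zero:
  fixes f :: "'a::ab_group_add \<Rightarrow> 'b::ab_group_add"
  assumes "\<And>x y. f (x + y) = f x + f y" shows "f 0 = 0"
  using assms[of 0 0] by simp

lemma additive_sum_list:
  fixes f :: "'a::ab_group_add \<Rightarrow> 'b::ab_group_add"
  assumes "\<And>x y. f (x + y) = f x + f y"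
  shows "f (sum_list (map g xs)) = sum_list (map (\<lambda>x. f (g x)) xs)"
  by (induction xs) (auto simp: assms additive_zero[OF assms])

lemma additive_sum:
  fixes f :: "'a::ab_group_add \<Rightarrow> 'b::ab_group_add"
  assumes "\<And>x y. f (x + y) = f x + f y"
  shows "f (sum g A) = sum (\<lambda>x. f (g x)) A"
proof (cases "finite A")
  case True then show ?thesis by (induction A rule: finite_induct) (auto simp: assms additive_zero[OF assms])
qed (simp add: additive_zero[OF assms])

lemma sum_list_swap:
  fixes f :: "'a \<Rightarrow> 'b \<Rightarrow> 'c::comm_monoid_add"
  shows "sum_list (map (\<lambda>p. sum_list (map (f p) B)) A) = sum_list (map (\<lambda>q. sum_list (map (\<lambda>p. f p q) A)) B)"
  by (induction A) (auto simp: sum_list_addf)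

lemma sum_list_sum_swap:
  fixes f :: "'a \<Rightarrow> 'b \<Rightarrow> 'c::comm_monoid_add"
  shows "sum_list (map (\<lambda>p. \<Sum>k\<in>K. f p k) A) = (\<Sum>k\<in>K. sum_list (map (\<lambda>p. f p k) A))"
  by (induction A) (auto simp: sum.distrib)

lemma sum_list_concat_map:
  "sum_list (map F (concat (map g xs))) = sum_list (map (\<lambda>p. sum_list (map F (g p))) xs)"
  by (induction xs) auto

fun hc :: "('h \<Rightarrow> 'h \<Rightarrow> 'h) \<Rightarrow> 'h list \<Rightarrow> 'h \<Rightarrow> 'h" where
  "hc h [] z = z"
| "hc h (q # qs) z = hc h qs (h q z)"

context vector_space begin

definition lin :: "('b \<Rightarrow> 'b) \<Rightarrow> bool" where
  "lin f \<longleftrightarrow> (\<forall>x y. f (x + y) = f x + f y) \<and> (\<forall>c x. f (scale c x) = scale c (f x))"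

lemma lin_iff: "Vector_Spaces.linear scale scale f \<longleftrightarrow> lin f"
  using vector_space_axioms by (simp add: linear_iff lin_def)

lemma bil_iff: "bilinear_map scale f \<longleftrightarrow> (\<forall>x. lin (f x)) \<and> (\<forall>y. lin (\<lambda>x. f x y))"
  by (simp add: bilinear_map_def lin_iff)

definition hml :: "nat \<Rightarrow> ('b list \<Rightarrow> 'b) \<Rightarrow> bool" where
  "hml n G \<longleftrightarrow> (\<forall>xs i a b c. length xs = n \<longrightarrow> i < n \<longrightarrow>
        G (xs[i := a + b]) = G (xs[i := a]) + G (xs[i := b]) \<and>
        G (xs[i := scale c a]) = scale c (G (xs[i := a])))"

lemma transfer:
  assumes te: "tensor_eq scale n t s" and G: "hml n G"
  shows "sum_list (map G t) = sum_list (map G s)"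
proof (rule sep[OF vector_space_axioms])
  fix \<phi> :: "'b \<Rightarrow> 'a" assume l: "Vector_Spaces.linear scale (*) \<phi>"
  have add: "\<And>x y. \<phi> (x + y) = \<phi> x + \<phi> y" and sc: "\<And>c x. \<phi> (scale c x) = c * \<phi> x"
    using l by (auto simp: linear_iff)
  have mf: "multilinear_form scale n (\<lambda>xs. \<phi> (G xs))"
    using G unfolding multilinear_form_def hml_def by (auto simp: add sc)
  have "\<phi> (sum_list (map G t)) = sum_list (map (\<lambda>xs. \<phi> (G xs)) t)"
    by (rule additive_sum_list[OF add])
  also have "\<dots> = sum_list (map (\<lambda>xs. \<phi> (G xs)) s)"
    using te mf unfolding tensor_eq_def by blast
  also have "\<dots> = \<phi> (sum_list (map G s))"
    by (rule additive_sum_list[OF add, symmetric])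
  finally show "\<phi> (sum_list (map G t)) = \<phi> (sum_list (map G s))" .
qed

lemma lin_sum_list: "lin f \<Longrightarrow> f (sum_list (map g xs)) = sum_list (map (\<lambda>x. f (g x)) xs)"
  unfolding lin_def by (rule additive_sum_list) auto

lemma lin_sum: "lin f \<Longrightarrow> f (sum g A) = sum (\<lambda>x. f (g x)) A"
  unfolding lin_def by (rule additive_sum) auto

lemma lin_0: "lin f \<Longrightarrow> f 0 = 0"
  unfolding lin_def by (rule additive_zero) auto

lemma lin_diff: "lin f \<Longrightarrow> f (x - y) = f x - f y"
  unfolding lin_def by (metis add_diff_cancel diff_add_cancel)

lemma lin_hc: "(\<And>q. lin (h q)) \<Longrightarrow> lin (hc h qs)"
  by (induction qs) (auto simp: lin_def)

lemma hc_ml: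
  assumes "\<And>q. lin (h q)" "\<And>z. lin (\<lambda>q. h q z)" "j < length qs"
  shows "hc h (qs[j := a + b]) z = hc h (qs[j := a]) z + hc h (qs[j := b]) z \<and>
         hc h (qs[j := scale c a]) z = scale c (hc h (qs[j := a]) z)"
  using assms(3)
proof (induction qs arbitrary: j z)
  case Nil then show ?case by simp
next
  case (Cons q qs)
  show ?case
  proof (cases j)
    case 0
    have l: "lin (hc h qs)" using lin_hc assms(1) by blast
    have "h (a + b) z = h a z + h b z" "h (scale c a) z = scale c (h a z)"
      using assms(2)[of z] unfolding lin_def by auto
    then show ?thesis using 0 l unfolding lin_def by simp
  next
    case (Suc j') then show ?thesis using Cons by simp
  qed
qed

end




lemma len2: "length p = 2 \<Longrightarrow> p = [p!0, p!1]"
  by (cases p; cases "tl p"; auto)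

lemma rev2: "length p = 2 \<Longrightarrow> rev p ! 0 = p ! 1 \<and> rev p ! 1 = p ! 0"
  by (subst (1 2) len2, auto)

lemma te_refl: "tensor_eq sc n t t" by (simp add: tensor_eq_def)
lemma te_sym: "tensor_eq sc n t s \<Longrightarrow> tensor_eq sc n s t" by (simp add: tensor_eq_def)
lemma te_trans: "tensor_eq sc n t s \<Longrightarrow> tensor_eq sc n s r \<Longrightarrow> tensor_eq sc n t r" by (simp add: tensor_eq_def)

lemma ml_rev:
  fixes sc :: "'k::field \<Rightarrow> 'h::ab_group_add \<Rightarrow> 'h" and F :: "'h list \<Rightarrow> 'k"
  shows "multilinear_form sc n F \<Longrightarrow> multilinear_form sc n (\<lambda>xs. F (rev xs))"
  unfolding multilinear_form_def
proof (intro allI impI)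
  fix xs :: "'h list" and i a b c
  assume F: "\<forall>xs i a b c. length xs = n \<longrightarrow> i < n \<longrightarrow>
        F (xs[i := a + b]) = F (xs[i := a]) + F (xs[i := b]) \<and> F (xs[i := sc c a]) = c * F (xs[i := a])"
    and l: "length xs = n" and i: "i < n"
  have r: "\<And>v. rev (xs[i := v]) = (rev xs)[n - i - 1 := v]" using rev_update[of i xs] l i by simp
  show "F (rev (xs[i := a + b])) = F (rev (xs[i := a])) + F (rev (xs[i := b])) \<and>
       F (rev (xs[i := sc c a])) = c * F (rev (xs[i := a]))"
    unfolding r using F l i by auto
qed

lemma te_rev: "tensor_eq sc n t s \<Longrightarrow> tensor_eq sc n (map rev t) (map rev s)"
  unfolding tensor_eq_def by (auto simp: o_def dest: ml_rev)

lemma tm_swap: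
  fixes F :: "'h list \<Rightarrow> 'c::comm_monoid_add"
  assumes "\<forall>p\<in>set A. length p = 2" "\<forall>q\<in>set B. length q = 2"
  shows "sum_list (map F (map rev (tensor_mult f B A))) =
         sum_list (map F (tensor_mult (\<lambda>a b. f b a) (map rev A) (map rev B)))"
proof -
  have "sum_list (map F (map rev (tensor_mult f B A))) =
        sum_list (map (\<lambda>q. sum_list (map (\<lambda>p. F [f (q!1) (p!1), f (q!0) (p!0)]) A)) B)"
    unfolding tensor_mult_def map_map by (simp add: sum_list_concat_map o_def)
  also have "\<dots> = sum_list (map (\<lambda>p. sum_list (map (\<lambda>q. F [f (q!1) (p!1), f (q!0) (p!0)]) B)) A)"
    by (induction B) (auto simp: sum_list_addf)
  also have "\<dots> = sum_list (map F (tensor_mult (\<lambda>a b. f b a) (map rev A) (map rev B)))"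
  proof -
    have "\<And>p q. p \<in> set A \<Longrightarrow> q \<in> set B \<Longrightarrow>
       F [f (q!1) (p!1), f (q!0) (p!0)] = F [f (rev q ! 0) (rev p ! 0), f (rev q ! 1) (rev p ! 1)]"
    proof -
      fix p q assume "p \<in> set A" "q \<in> set B"
      then obtain a b c d where "p = [a,b]" "q = [c,d]" using assms len2 by metis
      then show "F [f (q!1) (p!1), f (q!0) (p!0)] = F [f (rev q ! 0) (rev p ! 0), f (rev q ! 1) (rev p ! 1)]" by simp
    qed
    then show ?thesis unfolding tensor_mult_def
      by (simp add: sum_list_concat_map o_def cong: map_cong)
  qed
  finally show ?thesis .
qed

lemma te_tm_swap:
  assumes "\<forall>p\<in>set A. length p = 2" "\<forall>q\<in>set B. length q = 2"
  shows "tensor_eq sc 2 (map rev (tensor_mult f B A)) (tensor_mult (\<lambda>a b. f b a) (map rev A) (map rev B))"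
  unfolding tensor_eq_def using tm_swap[OF assms] by (simp only: map_map) blast

lemma coass_rev0:
  assumes "\<forall>x. \<forall>p\<in>set (\<Delta> x). length p = 2"
  shows "tensor_at 0 (\<lambda>x. map rev (\<Delta> x)) (map rev (\<Delta> x)) = map rev (tensor_at 1 \<Delta> (\<Delta> x))"
  unfolding tensor_at_def map_concat map_map
  apply (rule arg_cong[where f=concat])
  apply (rule map_cong, simp)
  subgoal for p
  proof -
    assume "p \<in> set (\<Delta> x)"
    then have "length p = 2" using assms by auto
    then obtain a b where "p = [a, b]" by (metis len2)
    then show ?thesis by simp
  qed
  done

lemma coass_rev1:
  assumes "\<forall>x. \<forall>p\<in>set (\<Delta> x). length p = 2"
  shows "tensor_at 1 (\<lambda>x. map rev (\<Delta> x)) (map rev (\<Delta> x)) = map rev (tensor_at 0 \<Delta> (\<Delta> x))"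
  unfolding tensor_at_def map_concat map_map
  apply (rule arg_cong[where f=concat])
  apply (rule map_cong, simp)
  subgoal for p
  proof -
    assume "p \<in> set (\<Delta> x)"
    then have "length p = 2" using assms by auto
    then obtain a b where "p = [a, b]" by (metis len2)
    then show ?thesis by simp
  qed
  done

lemma bil_swap: "bilinear_map sc (\<lambda>x y. f y x) \<longleftrightarrow> bilinear_map sc f"
  unfolding bilinear_map_def by auto

lemma te_scale_swap:
  assumes "\<forall>p\<in>set t. length p = 2"
  shows "tensor_eq sc 2 (map rev (map (\<lambda>p. [sc c (p!0), p!1]) t)) (map (\<lambda>p. [sc c (p!0), p!1]) (map rev t))"
  unfolding tensor_eq_def map_map
proof (intro allI impI arg_cong[where f=sum_list] map_cong refl)
  fix F p assume F: "multilinear_form sc 2 F" and p: "p \<in> set t"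
  have l: "length p = 2" using assms p by auto
  have F': "\<And>xs i a c. length xs = 2 \<Longrightarrow> i < 2 \<Longrightarrow> F (xs[i := sc c a]) = c * F (xs[i:=a])"
    using F unfolding multilinear_form_def by blast
  have a: "F [p!1, sc c (p!0)] = c * F [p!1, p!0]"
    using F'[of "[p!1,p!0]" 1 c "p!0"] by simp
  have b: "F [sc c (p!1), p!0] = c * F [p!1, p!0]"
    using F'[of "[p!1,p!0]" 0 c "p!1"] by simp
  show "(F \<circ> (rev \<circ> (\<lambda>p. [sc c (p ! 0), p ! 1]))) p = (F \<circ> ((\<lambda>p. [sc c (p ! 0), p ! 1]) \<circ> rev)) p"
    using a b rev2[OF l] by simp
qed

lemma coproduct_op:
  assumes "coproduct_map sc \<Delta>"
  shows "coproduct_map sc (\<lambda>x. map rev (\<Delta> x))"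
  using assms unfolding coproduct_map_def
  apply (intro conjI allI)
    apply force
   apply (drule conjunct2, drule conjunct1)
   apply (metis map_append te_rev)
  apply (rule te_trans[OF te_rev te_scale_swap], blast, blast)
  done

lemma sumrev:
  fixes G :: "'h list \<Rightarrow> 'c::comm_monoid_add"
  assumes a: "\<forall>p\<in>set xs. length p = 2"
  shows "sum_list (map G (map rev xs)) = sum_list (map (\<lambda>p. G [p!1, p!0]) xs)"
proof -
  have "\<And>p. p \<in> set xs \<Longrightarrow> G (rev p) = G [p!1, p!0]"
  proof -
    fix p assume "p \<in> set xs"
    then obtain u v where "p = [u, v]" using a len2 by metis
    then show "G (rev p) = G [p!1, p!0]" by simp
  qed
  then show ?thesis by (simp add: o_def cong: map_cong)
qed

lemma hopf_op:
  assumes H: "hopf_algebra sc m one \<Delta> \<epsilon>"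
  shows "hopf_algebra sc (\<lambda>x y. m y x) one (\<lambda>x. map rev (\<Delta> x)) \<epsilon>"
proof -
  have B: "bialgebra sc m one \<Delta> \<epsilon>" using H by (simp add: hopf_algebra_def)
  have cm: "coproduct_map sc \<Delta>" using B by (simp add: bialgebra_def)
  have L: "\<forall>x. \<forall>p\<in>set (\<Delta> x). length p = 2" using cm by (simp add: coproduct_map_def)
  have L': "\<forall>p\<in>set (\<Delta> x). length p = 2" for x using L by blast
  have Bv: "vector_space sc" and Bb: "bilinear_map sc m" and Ba: "\<forall>x y z. m (m x y) z = m x (m y z)"
    and Bu: "\<forall>x. m one x = x \<and> m x one = x" and Bl: "Vector_Spaces.linear sc (*) \<epsilon>"
    and Bc: "\<forall>x. tensor_eq sc 3 (tensor_at 0 \<Delta> (\<Delta> x)) (tensor_at 1 \<Delta> (\<Delta> x))"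
    and Be: "\<forall>x. sum_list (map (\<lambda>p. sc (\<epsilon> (p!0)) (p!1)) (\<Delta> x)) = x \<and>
          sum_list (map (\<lambda>p. sc (\<epsilon> (p!1)) (p!0)) (\<Delta> x)) = x"
    and Bm: "\<forall>x y. tensor_eq sc 2 (\<Delta> (m x y)) (tensor_mult m (\<Delta> x) (\<Delta> y))"
    and Bo: "tensor_eq sc 2 (\<Delta> one) [[one, one]]"
    and Bem: "\<forall>x y. \<epsilon> (m x y) = \<epsilon> x * \<epsilon> y" and Beo: "\<epsilon> one = 1"
    using B unfolding bialgebra_def by blast+
  have bi: "bialgebra sc (\<lambda>x y. m y x) one (\<lambda>x. map rev (\<Delta> x)) \<epsilon>"
    unfolding bialgebra_def
  proof (intro conjI allI)
    show "vector_space sc" by (rule Bv)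
    show "bilinear_map sc (\<lambda>x y. m y x)" by (rule bil_swap[of sc m, THEN iffD2, OF Bb])
    show "\<And>x y z. m z (m y x) = m (m z y) x" using Ba by simp
    show "\<And>x. m x one = x" "\<And>x. m one x = x" using Bu by simp_all
    show "coproduct_map sc (\<lambda>x. map rev (\<Delta> x))" by (rule coproduct_op[OF cm])
    show "Vector_Spaces.linear sc (*) \<epsilon>" by (rule Bl)
    fix x
    show "tensor_eq sc 3 (tensor_at 0 (\<lambda>x. map rev (\<Delta> x)) (map rev (\<Delta> x)))
                         (tensor_at 1 (\<lambda>x. map rev (\<Delta> x)) (map rev (\<Delta> x)))"
      unfolding coass_rev0[OF L] coass_rev1[OF L]
      using Bc by (blast intro: te_rev te_sym)
    show "sum_list (map (\<lambda>p. sc (\<epsilon> (p ! 0)) (p ! 1)) (map rev (\<Delta> x))) = x"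
      "sum_list (map (\<lambda>p. sc (\<epsilon> (p ! 1)) (p ! 0)) (map rev (\<Delta> x))) = x"
      unfolding sumrev[OF L'] using Be by simp_all
    fix y
    have "tensor_eq sc 2 (map rev (\<Delta> (m y x))) (map rev (tensor_mult m (\<Delta> y) (\<Delta> x)))"
      using Bm by (blast intro: te_rev)
    then show "tensor_eq sc 2 (map rev (\<Delta> (m y x))) (tensor_mult (\<lambda>x y. m y x) (map rev (\<Delta> x)) (map rev (\<Delta> y)))"
      using te_tm_swap[OF L'[of x] L'[of y], of sc m] te_trans by blast
    show "\<epsilon> (m y x) = \<epsilon> x * \<epsilon> y" using Bem by (simp add: mult.commute)
  next
    show "tensor_eq sc 2 (map rev (\<Delta> one)) [[one, one]]"
      using te_rev[OF Bo] by simp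
    show "\<epsilon> one = 1" by (rule Beo)
  qed
  obtain S where S: "Vector_Spaces.linear sc sc S"
    "\<forall>x. sum_list (map (\<lambda>p. m (S (p!0)) (p!1)) (\<Delta> x)) = sc (\<epsilon> x) one \<and>
         sum_list (map (\<lambda>p. m (p!0) (S (p!1))) (\<Delta> x)) = sc (\<epsilon> x) one"
    using H by (auto simp: hopf_algebra_def)
  show ?thesis unfolding hopf_algebra_def sumrev[OF L']
    using bi S by (intro conjI exI[of _ S]) auto
qed

lemma morph_op:
  assumes "coalgebra_morphism2 sc \<Delta> \<epsilon> f" "\<forall>x. \<forall>p\<in>set (\<Delta> x). length p = 2"
  shows "coalgebra_morphism2 sc (\<lambda>x. map rev (\<Delta> x)) \<epsilon> (\<lambda>x y. f y x)"
  unfolding coalgebra_morphism2_def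
proof (intro conjI allI)
  show "bilinear_map sc (\<lambda>x y. f y x)"
    using assms bil_swap[of sc f] by (simp add: coalgebra_morphism2_def)
  fix x y
  have "tensor_eq sc 2 (map rev (\<Delta> (f y x))) (map rev (tensor_mult f (\<Delta> y) (\<Delta> x)))"
    using assms by (auto simp: coalgebra_morphism2_def intro!: te_rev)
  then show "tensor_eq sc 2 (map rev (\<Delta> (f y x))) (tensor_mult (\<lambda>x y. f y x) (map rev (\<Delta> x)) (map rev (\<Delta> y)))"
    using te_tm_swap[of "\<Delta> x" "\<Delta> y" sc f] assms(2) te_trans by blast
  show "\<epsilon> (f y x) = \<epsilon> x * \<epsilon> y" using assms by (simp add: coalgebra_morphism2_def mult.commute)
qed




context vector_space begin

lemma lin_add: "lin f \<Longrightarrow> f (x + y) = f x + f y" by (simp add: lin_def)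
lemma lin_scale: "lin f \<Longrightarrow> f (scale c x) = scale c (f x)" by (simp add: lin_def)
lemma lin_neg: "lin f \<Longrightarrow> f (- x) = - f x" using lin_diff[of f 0 x] lin_0[of f] by simp

lemma lin_comp: "lin f \<Longrightarrow> lin g \<Longrightarrow> lin (\<lambda>x. f (g x))" by (simp add: lin_def)
lemma lin_sub: "lin f \<Longrightarrow> lin g \<Longrightarrow> lin (\<lambda>x. f x - g x)"
  by (simp add: lin_def algebra_simps)
lemma lin_scale_fun: "lin (scale c)" by (simp add: lin_def algebra_simps)
lemma lin_id: "lin (\<lambda>x. x)" by (simp add: lin_def)

lemma hml2:
  assumes "\<And>b. lin (\<lambda>a. \<Phi> a b)" "\<And>a. lin (\<Phi> a)"
  shows "hml 2 (\<lambda>p. \<Phi> (p!0) (p!1))"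
  unfolding hml_def
proof (intro allI impI)
  fix xs :: "'b list" and i :: nat and a b c assume l: "length xs = 2" and i: "i < 2"
  obtain u v where xs: "xs = [u, v]" using l len2 by metis
  show "\<Phi> (xs[i := a + b] ! 0) (xs[i := a + b] ! 1) =
        \<Phi> (xs[i := a] ! 0) (xs[i := a] ! 1) + \<Phi> (xs[i := b] ! 0) (xs[i := b] ! 1) \<and>
       \<Phi> (xs[i := scale c a] ! 0) (xs[i := scale c a] ! 1) = scale c (\<Phi> (xs[i := a] ! 0) (xs[i := a] ! 1))"
  proof (cases i)
    case 0 then show ?thesis using assms(1)[of v] by (simp add: xs lin_def)
  next
    case (Suc j) then have "i = 1" using i by simp
    then show ?thesis using assms(2)[of u] by (simp add: xs lin_def)
  qed
qed

lemma hml3: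
  assumes "\<And>b d. lin (\<lambda>a. \<Phi> a b d)" "\<And>a d. lin (\<lambda>b. \<Phi> a b d)" "\<And>a b. lin (\<Phi> a b)"
  shows "hml 3 (\<lambda>p. \<Phi> (p!0) (p!1) (p!2))"
  unfolding hml_def
proof (intro allI impI)
  fix xs :: "'b list" and i :: nat and a b c assume l: "length xs = 3" and i: "i < 3"
  obtain u v w where xs: "xs = [u, v, w]" using l
    by (cases xs; cases "tl xs"; cases "tl (tl xs)"; auto)
  have "i = 0 \<or> i = 1 \<or> i = 2" using i by auto
  then show "\<Phi> (xs[i := a + b] ! 0) (xs[i := a + b] ! 1) (xs[i := a + b] ! 2) =
        \<Phi> (xs[i := a] ! 0) (xs[i := a] ! 1) (xs[i := a] ! 2) + \<Phi> (xs[i := b] ! 0) (xs[i := b] ! 1) (xs[i := b] ! 2) \<and>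
       \<Phi> (xs[i := scale c a] ! 0) (xs[i := scale c a] ! 1) (xs[i := scale c a] ! 2) =
         scale c (\<Phi> (xs[i := a] ! 0) (xs[i := a] ! 1) (xs[i := a] ! 2))"
    using assms(1)[of v w] assms(2)[of u w] assms(3)[of u v]
    by (auto simp: xs lin_def numeral_2_eq_2)
qed

definition cstruct :: "('b \<Rightarrow> 'b list list) \<Rightarrow> ('b \<Rightarrow> 'a) \<Rightarrow> 'b \<Rightarrow> bool" where
  "cstruct D \<epsilon> one \<longleftrightarrow> coproduct_map scale D \<and> Vector_Spaces.linear scale (*) \<epsilon> \<and>
     (\<forall>x. tensor_eq scale 3 (tensor_at 0 D (D x)) (tensor_at 1 D (D x))) \<and>
     (\<forall>x. sum_list (map (\<lambda>p. scale (\<epsilon> (p!0)) (p!1)) (D x)) = x \<and>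
          sum_list (map (\<lambda>p. scale (\<epsilon> (p!1)) (p!0)) (D x)) = x) \<and>
     tensor_eq scale 2 (D one) [[one, one]] \<and> \<epsilon> one = 1"

lemma bialg_cstruct: "bialgebra scale m one D \<epsilon> \<Longrightarrow> cstruct D \<epsilon> one"
  unfolding bialgebra_def cstruct_def by blast

lemma bilD1: "bilinear_map scale f \<Longrightarrow> lin (f x)" by (simp add: bil_iff)
lemma bilD2: "bilinear_map scale f \<Longrightarrow> lin (\<lambda>x. f x y)" by (simp add: bil_iff)

lemma conv_bil:
  assumes C: "cstruct D \<epsilon> one" and f: "bilinear_map scale f" and g: "bilinear_map scale g"
  shows "bilinear_map scale (conv D f g)"
  unfolding bil_iff
proof (intro conjI allI)
  fix x
  show "lin (conv D f g x)" unfolding conv_def lin_def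
  proof (intro conjI allI)
    fix y z c
    show "sum_list (map (\<lambda>p. f (p ! 0) (g (p ! 1) (y + z))) (D x)) =
          sum_list (map (\<lambda>p. f (p ! 0) (g (p ! 1) y)) (D x)) + sum_list (map (\<lambda>p. f (p ! 0) (g (p ! 1) z)) (D x))"
      using f g by (simp add: lin_add bilD1 sum_list_addf)
    show "sum_list (map (\<lambda>p. f (p ! 0) (g (p ! 1) (scale c y))) (D x)) = scale c (sum_list (map (\<lambda>p. f (p ! 0) (g (p ! 1) y)) (D x)))"
      using f g by (simp add: lin_scale bilD1 lin_sum_list[OF lin_scale_fun])
  qed
next
  fix y
  have cm: "coproduct_map scale D" using C by (simp add: cstruct_def)
  have G: "hml 2 (\<lambda>p. f (p!0) (g (p!1) y))"
    by (rule hml2) (simp_all add: bilD2[OF f] lin_comp[OF bilD1[OF f] bilD2[OF g]])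
  show "lin (\<lambda>x. conv D f g x y)" unfolding conv_def lin_def
  proof (intro conjI allI)
    fix x z c
    show "sum_list (map (\<lambda>p. f (p ! 0) (g (p ! 1) y)) (D (x + z))) =
       sum_list (map (\<lambda>p. f (p ! 0) (g (p ! 1) y)) (D x)) + sum_list (map (\<lambda>p. f (p ! 0) (g (p ! 1) y)) (D z))"
      using transfer[OF _ G, of "D (x+z)" "D x @ D z"] cm by (simp add: coproduct_map_def)
    have "sum_list (map (\<lambda>p. f (p ! 0) (g (p ! 1) y)) (D (scale c x))) =
          sum_list (map (\<lambda>p. f (p ! 0) (g (p ! 1) y)) (map (\<lambda>p. [scale c (p!0), p!1]) (D x)))"
      using transfer[OF _ G] cm by (simp add: coproduct_map_def del: map_map)
    also have "\<dots> = scale c (sum_list (map (\<lambda>p. f (p ! 0) (g (p ! 1) y)) (D x)))"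
      using f by (simp add: o_def lin_sum_list[OF lin_scale_fun] lin_scale[OF bilD2])
    finally show "sum_list (map (\<lambda>p. f (p ! 0) (g (p ! 1) y)) (D (scale c x))) =
          scale c (sum_list (map (\<lambda>p. f (p ! 0) (g (p ! 1) y)) (D x)))" .
  qed
qed

lemma conv_unit_left:
  assumes C: "cstruct D \<epsilon> one" and g: "bilinear_map scale g"
  shows "conv D (\<lambda>x y. scale (\<epsilon> x) y) g = g"
proof (intro ext)
  fix x y
  have "conv D (\<lambda>x y. scale (\<epsilon> x) y) g x y = sum_list (map (\<lambda>p. g (scale (\<epsilon> (p!0)) (p!1)) y) (D x))"
    unfolding conv_def by (simp add: lin_scale[OF bilD2[OF g]])
  also have "\<dots> = g (sum_list (map (\<lambda>p. scale (\<epsilon> (p!0)) (p!1)) (D x))) y"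
    using lin_sum_list[OF bilD2[OF g], of "\<lambda>p. scale (\<epsilon> (p!0)) (p!1)" "D x"] by simp
  also have "\<dots> = g x y" using C by (simp add: cstruct_def)
  finally show "conv D (\<lambda>x y. scale (\<epsilon> x) y) g x y = g x y" .
qed

lemma conv_unit_right:
  assumes C: "cstruct D \<epsilon> one" and f: "bilinear_map scale f"
  shows "conv D f (\<lambda>x y. scale (\<epsilon> x) y) = f"
proof (intro ext)
  fix x y
  have "conv D f (\<lambda>x y. scale (\<epsilon> x) y) x y = sum_list (map (\<lambda>p. f (scale (\<epsilon> (p!1)) (p!0)) y) (D x))"
    unfolding conv_def by (simp add: lin_scale[OF bilD1[OF f]] lin_scale[OF bilD2[OF f]])
  also have "\<dots> = f (sum_list (map (\<lambda>p. scale (\<epsilon> (p!1)) (p!0)) (D x))) y"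
    using lin_sum_list[OF bilD2[OF f], of "\<lambda>p. scale (\<epsilon> (p!1)) (p!0)" "D x"] by simp
  also have "\<dots> = f x y" using C by (simp add: cstruct_def)
  finally show "conv D f (\<lambda>x y. scale (\<epsilon> x) y) x y = f x y" .
qed

lemma conv_one:
  assumes C: "cstruct D \<epsilon> one" and f: "bilinear_map scale f" and g: "bilinear_map scale g"
  shows "conv D f g one y = f one (g one y)"
proof -
  have G: "hml 2 (\<lambda>p. f (p!0) (g (p!1) y))"
    by (rule hml2) (simp_all add: bilD2[OF f] lin_comp[OF bilD1[OF f] bilD2[OF g]])
  show ?thesis unfolding conv_def
    using transfer[OF _ G, of "D one" "[[one,one]]"] C by (simp add: cstruct_def)
qed

lemma len2E: assumes "length p = 2" obtains a b where "p = [a, b]"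
  using assms by (auto simp: length_Suc_conv numeral_2_eq_2)

lemma at0_3: "length p = 2 \<Longrightarrow> length q = 2 \<Longrightarrow> take 0 p @ q @ drop (Suc 0) p = [q!0, q!1, p!1]"
  by (elim len2E) simp
lemma at1_3: "length p = 2 \<Longrightarrow> length q = 2 \<Longrightarrow> take 1 p @ q @ drop (Suc 1) p = [p!0, q!0, q!1]"
  by (elim len2E) simp

lemma ss_cong: "(\<And>p q. p \<in> set A \<Longrightarrow> q \<in> set (B p) \<Longrightarrow> F p q = F' p q) \<Longrightarrow>
  sum_list (map (\<lambda>p. sum_list (map (F p) (B p))) A) = sum_list (map (\<lambda>p. sum_list (map (F' p) (B p))) A)"
  by (auto intro!: arg_cong[where f=sum_list] map_cong)

lemma conv_assoc:
  assumes C: "cstruct D \<epsilon> one" and f: "bilinear_map scale f" and g: "bilinear_map scale g"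
    and k: "bilinear_map scale k"
  shows "conv D (conv D f g) k = conv D f (conv D g k)"
proof (intro ext)
  fix x y
  have cm: "coproduct_map scale D" using C by (simp add: cstruct_def)
  have L: "\<And>x p. p \<in> set (D x) \<Longrightarrow> length p = 2" using cm by (simp add: coproduct_map_def)
  let ?G = "\<lambda>p. f (p!0) (g (p!1) (k (p!2) y))"
  have G: "hml 3 ?G"
    by (rule hml3) (simp_all add: bilD2[OF f] lin_comp[OF bilD1[OF f] bilD2[OF g]]
       lin_comp[OF bilD1[OF f] lin_comp[OF bilD1[OF g] bilD2[OF k]]])
  have "conv D (conv D f g) k x y = sum_list (map (\<lambda>p. sum_list (map (\<lambda>q. f (q!0) (g (q!1) (k (p!1) y))) (D (p!0)))) (D x))"
    by (simp add: conv_def)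
  also have "\<dots> = sum_list (map ?G (tensor_at 0 D (D x)))"
    unfolding tensor_at_def sum_list_concat_map map_map o_def
    by (rule ss_cong) (simp only: at0_3[OF L L], simp)
  also have "\<dots> = sum_list (map ?G (tensor_at 1 D (D x)))"
    by (rule transfer[OF _ G]) (use C in \<open>simp add: cstruct_def\<close>)
  also have "\<dots> = sum_list (map (\<lambda>p. sum_list (map (\<lambda>q. f (p!0) (g (q!0) (k (q!1) y))) (D (p!1)))) (D x))"
    unfolding tensor_at_def sum_list_concat_map map_map o_def
    by (rule ss_cong) (simp only: at1_3[OF L L], simp)
  also have "\<dots> = conv D f (conv D g k) x y"
    unfolding conv_def using f by (simp add: lin_sum_list[OF bilD1[OF f]])
  finally show "conv D (conv D f g) k x y = conv D f (conv D g k) x y" .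
qed

end



definition Tp :: "('h \<Rightarrow> 'h list list) \<Rightarrow> ('h \<Rightarrow> 'h \<Rightarrow> 'h) \<Rightarrow> nat \<Rightarrow> ('h \<Rightarrow> 'h \<Rightarrow> 'h) \<Rightarrow> ('h \<Rightarrow> 'h \<Rightarrow> 'h::ab_group_add)" where
  "Tp D h k a = ((\<lambda>b. conv D h b) ^^ k) a"

definition ch :: "('h \<Rightarrow> 'h \<Rightarrow> 'h) \<Rightarrow> ('h \<Rightarrow> 'h \<Rightarrow> 'h) \<Rightarrow> 'h list \<Rightarrow> 'h \<Rightarrow> 'h" where
  "ch h a p y = hc h (tl p) (a (hd p) y)"

lemma le_sum_list_map: "a \<in> set xs \<Longrightarrow> (f a :: nat) \<le> sum_list (map f xs)"
  by (induction xs) auto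

lemma Tp_0: "Tp D h 0 a = a" by (simp add: Tp_def)
lemma Tp_Suc: "Tp D h (Suc k) a = conv D h (Tp D h k a)" by (simp add: Tp_def)
lemma Tp_Suc': "Tp D h (Suc k) a = Tp D h k (conv D h a)" by (simp add: Tp_def funpow_Suc_right del: funpow.simps)
lemma Tp_add: "Tp D h (k + n) a = Tp D h k (Tp D h n a)" by (simp add: Tp_def funpow_add)

context vector_space begin

lemma red_len:
  assumes cm: "coproduct_map scale \<Delta>"
  shows "q \<in> set (reduced_coproduct scale one \<Delta> \<epsilon> r) \<Longrightarrow> length q = 2"
  using cm by (auto simp: reduced_coproduct_def Let_def coproduct_map_def)

lemma RI_len:
  assumes cm: "coproduct_map scale \<Delta>"
  shows "p \<in> set (reduced_iter scale one \<Delta> \<epsilon> k x) \<Longrightarrow> length p = Suc k"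
proof (induction k arbitrary: p)
  case 0 then show ?case by simp
next
  case (Suc k)
  then obtain p' q where p': "p' \<in> set (reduced_iter scale one \<Delta> \<epsilon> k x)"
    and q: "q \<in> set (reduced_coproduct scale one \<Delta> \<epsilon> (p'!0))" and p: "p = take 0 p' @ q @ drop (Suc 0) p'"
    by (auto simp: tensor_at_def)
  show ?case using Suc.IH[OF p'] red_len[OF cm q] p by simp
qed

context
  fixes \<Delta> :: "'b \<Rightarrow> 'b list list" and \<epsilon> :: "'b \<Rightarrow> 'a" and one :: 'b and h :: "'b \<Rightarrow> 'b \<Rightarrow> 'b"
  assumes C: "cstruct (\<lambda>x. map rev (\<Delta> x)) \<epsilon> one"
    and cm: "coproduct_map scale \<Delta>"
    and hb: "bilinear_map scale h" and h1: "\<And>y. h one y = 0"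
begin

lemma Lc: "\<forall>p\<in>set (\<Delta> x). length p = 2" using cm by (simp add: coproduct_map_def)

lemma red_sum:
  assumes ab: "bilinear_map scale a" and a1: "\<And>y. a one y = 0"
  shows "sum_list (map (\<lambda>q. h (q!1) (a (q!0) y)) (reduced_coproduct scale one \<Delta> \<epsilon> r))
         = conv (\<lambda>x. map rev (\<Delta> x)) h a r y"
proof -
  let ?D = "\<lambda>x. map rev (\<Delta> x)"
  have lc: "lin (\<lambda>x. conv ?D h a x y)" using conv_bil[OF C hb ab] by (simp add: bil_iff)
  have c1: "conv ?D h a one y = 0" using conv_one[OF C hb ab] h1 by simp
  have e1: "sum_list (map (\<lambda>q. h (q!1) (a (q!0) y)) (\<Delta> r')) = conv ?D h a r' y" for r'
    unfolding conv_def sumrev[OF Lc] by simp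
  have "conv ?D h a (rho scale one \<epsilon> r) y = conv ?D h a r y"
    unfolding rho_def using lin_diff[OF lc] lin_scale[OF lc] c1 by simp
  moreover have "h (rho scale one \<epsilon> r) (a (- one) y) = 0"
    using lin_neg[OF bilD2[OF ab]] a1 lin_0[OF bilD1[OF hb]] by simp
  ultimately show ?thesis
    unfolding reduced_coproduct_def Let_def using e1 h1 by simp
qed

lemma T_formula:
  "\<forall>a x y. bilinear_map scale a \<longrightarrow> (\<forall>y. a one y = 0) \<longrightarrow>
     Tp (\<lambda>x. map rev (\<Delta> x)) h k a x y = sum_list (map (\<lambda>p. ch h a p y) (reduced_iter scale one \<Delta> \<epsilon> k x))"
proof (induction k)
  case 0
  show ?case
  proof (intro allI impI)
    fix a x y assume ab: "bilinear_map scale a" and a1: "\<forall>y. a one y = 0"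
    show "Tp (\<lambda>x. map rev (\<Delta> x)) h 0 a x y = sum_list (map (\<lambda>p. ch h a p y) (reduced_iter scale one \<Delta> \<epsilon> 0 x))"
      using lin_diff[OF bilD2[OF ab]] lin_scale[OF bilD2[OF ab]] a1
      by (simp add: Tp_0 ch_def rho_def)
  qed
next
  case (Suc k)
  show ?case
  proof (intro allI impI)
    fix a x y assume ab: "bilinear_map scale a" and a1: "\<forall>y. a one y = 0"
    let ?D = "\<lambda>x. map rev (\<Delta> x)"
    let ?a = "conv ?D h a"
    have ab': "bilinear_map scale ?a" by (rule conv_bil[OF C hb ab])
    have a1': "\<forall>y. ?a one y = 0" using conv_one[OF C hb ab] h1 by simp
    have "Tp ?D h (Suc k) a x y = sum_list (map (\<lambda>p. ch h ?a p y) (reduced_iter scale one \<Delta> \<epsilon> k x))"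
      unfolding Tp_Suc' using Suc.IH ab' a1' by blast
    also have "\<dots> = sum_list (map (\<lambda>p. ch h a p y) (reduced_iter scale one \<Delta> \<epsilon> (Suc k) x))"
      unfolding reduced_iter.simps tensor_at_def sum_list_concat_map map_map o_def
    proof (intro arg_cong[where f=sum_list] map_cong refl)
      fix p assume p: "p \<in> set (reduced_iter scale one \<Delta> \<epsilon> k x)"
      obtain p0 rest where pr: "p = p0 # rest" using RI_len[OF cm p] by (cases p) auto
      have lh: "lin (hc h rest)" by (rule lin_hc) (rule bilD1[OF hb])
      have "\<And>q. q \<in> set (reduced_coproduct scale one \<Delta> \<epsilon> (p ! 0)) \<Longrightarrow>
             ch h a (take 0 p @ q @ drop (Suc 0) p) y = hc h rest (h (q!1) (a (q!0) y))"
      proof -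
        fix q assume q: "q \<in> set (reduced_coproduct scale one \<Delta> \<epsilon> (p ! 0))"
        obtain q0 q1 where "q = [q0, q1]" using red_len[OF cm q] len2 by metis
        then show "ch h a (take 0 p @ q @ drop (Suc 0) p) y = hc h rest (h (q!1) (a (q!0) y))"
          by (simp add: pr ch_def)
      qed
      then have "sum_list (map (\<lambda>q. ch h a (take 0 p @ q @ drop (Suc 0) p) y) (reduced_coproduct scale one \<Delta> \<epsilon> (p ! 0)))
          = sum_list (map (\<lambda>q. hc h rest (h (q!1) (a (q!0) y))) (reduced_coproduct scale one \<Delta> \<epsilon> (p ! 0)))"
        by (simp cong: map_cong)
      also have "\<dots> = hc h rest (sum_list (map (\<lambda>q. h (q!1) (a (q!0) y)) (reduced_coproduct scale one \<Delta> \<epsilon> (p ! 0))))"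
        by (rule lin_sum_list[OF lh, symmetric])
      also have "\<dots> = ch h ?a p y"
        using red_sum[OF ab, of y "p!0"] a1 by (simp add: ch_def pr)
      finally show "ch h ?a p y = sum_list (map (\<lambda>q. ch h a (take 0 p @ q @ drop (Suc 0) p) y) (reduced_coproduct scale one \<Delta> \<epsilon> (p ! 0)))"
        by simp
    qed
    finally show "Tp ?D h (Suc k) a x y = sum_list (map (\<lambda>p. ch h a p y) (reduced_iter scale one \<Delta> \<epsilon> (Suc k) x))" .
  qed
qed

lemma ch_hml:
  assumes ab: "bilinear_map scale a"
  shows "hml (Suc n) (\<lambda>p. ch h a p y)"
  unfolding hml_def
proof (intro allI impI)
  fix xs :: "'b list" and i :: nat and u v c
  assume l: "length xs = Suc n" and i: "i < Suc n"
  obtain x0 rest where xs: "xs = x0 # rest" and lr: "length rest = n" using l by (cases xs) auto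
  have lh: "lin (hc h rest)" by (rule lin_hc) (rule bilD1[OF hb])
  show "ch h a (xs[i := u + v]) y = ch h a (xs[i := u]) y + ch h a (xs[i := v]) y \<and>
        ch h a (xs[i := scale c u]) y = scale c (ch h a (xs[i := u]) y)"
  proof (cases i)
    case 0
    then show ?thesis
      using lin_add[OF bilD2[OF ab]] lin_scale[OF bilD2[OF ab]] lin_add[OF lh] lin_scale[OF lh]
      by (simp add: xs ch_def)
  next
    case (Suc j)
    then have j: "j < length rest" using i lr by simp
    show ?thesis using hc_ml[OF bilD1[OF hb] bilD2[OF hb] j] by (simp add: xs Suc ch_def)
  qed
qed

lemma T_vanish:
  assumes ab: "bilinear_map scale a" and a1: "\<And>y. a one y = 0"
    and z: "tensor_eq scale (Suc n) (reduced_iter scale one \<Delta> \<epsilon> n x) []"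
  shows "Tp (\<lambda>x. map rev (\<Delta> x)) h n a x y = 0"
  using T_formula ab a1 transfer[OF z ch_hml[OF ab]] by simp

lemma u_bil: "bilinear_map scale (\<lambda>x y. scale (\<epsilon> x) y)"
proof -
  have l: "Vector_Spaces.linear scale (*) \<epsilon>" using C by (simp add: cstruct_def)
  have a: "\<epsilon> (x + z) = \<epsilon> x + \<epsilon> z" and s: "\<epsilon> (scale c x) = c * \<epsilon> x" for x z c
    using l by (auto simp: linear_iff)
  show ?thesis unfolding bil_iff lin_def
    by (simp add: a s scale_right_distrib scale_left_distrib)
qed

lemma Tp_bil: "bilinear_map scale a \<Longrightarrow> bilinear_map scale (Tp (\<lambda>x. map rev (\<Delta> x)) h k a)"
  by (induction k) (simp_all add: Tp_0 Tp_Suc conv_bil[OF C hb])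

lemma Tp_h_one: "Tp (\<lambda>x. map rev (\<Delta> x)) h j h one y = 0"
proof (cases j)
  case 0 then show ?thesis by (simp add: Tp_0 h1)
next
  case (Suc j') then show ?thesis
    by (simp add: Tp_Suc conv_one[OF C hb Tp_bil[OF hb]] h1)
qed

lemma P_vanish:
  assumes z: "tensor_eq scale (Suc n) (reduced_iter scale one \<Delta> \<epsilon> n x) []" and nk: "n \<le> k"
  shows "Tp (\<lambda>x. map rev (\<Delta> x)) h (Suc k) (\<lambda>x y. scale (\<epsilon> x) y) x y = 0"
proof -
  let ?D = "\<lambda>x. map rev (\<Delta> x)"
  have "Tp ?D h (Suc k) (\<lambda>x y. scale (\<epsilon> x) y) = Tp ?D h k h"
    by (simp add: Tp_Suc' conv_unit_right[OF C hb])
  also have "\<dots> = Tp ?D h n (Tp ?D h (k - n) h)"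
    using Tp_add[of ?D h n "k - n" h] nk by (simp add: add.commute)
  finally show ?thesis
    using T_vanish[OF Tp_bil[OF hb] Tp_h_one z] by simp
qed

lemma P_comm:
  "conv (\<lambda>x. map rev (\<Delta> x)) (Tp (\<lambda>x. map rev (\<Delta> x)) h k (\<lambda>x y. scale (\<epsilon> x) y)) h
   = Tp (\<lambda>x. map rev (\<Delta> x)) h (Suc k) (\<lambda>x y. scale (\<epsilon> x) y)"
proof (induction k)
  case 0 then show ?case
    by (simp add: Tp_0 Tp_Suc conv_unit_left[OF C hb] conv_unit_right[OF C hb])
next
  case (Suc k)
  show ?case
    by (simp only: Tp_Suc[of _ _ "Suc k"] Tp_Suc[of _ _ k] conv_assoc[OF C hb Tp_bil[OF u_bil] hb])
       (simp add: Suc[simplified Tp_Suc])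
qed

lemma conn_inverse:
  assumes conn: "\<forall>x. \<exists>n. tensor_eq scale (Suc n) (reduced_iter scale one \<Delta> \<epsilon> n x) []"
  shows "\<exists>g. bilinear_map scale g \<and>
     (\<forall>x y. conv (\<lambda>x. map rev (\<Delta> x)) (\<lambda>x y. scale (\<epsilon> x) y - h x y) g x y = scale (\<epsilon> x) y) \<and>
     (\<forall>x y. conv (\<lambda>x. map rev (\<Delta> x)) g (\<lambda>x y. scale (\<epsilon> x) y - h x y) x y = scale (\<epsilon> x) y)"
proof -
  let ?D = "\<lambda>x. map rev (\<Delta> x)"
  let ?u = "\<lambda>x y. scale (\<epsilon> x) y"
  define P where "P k = Tp ?D h k ?u" for k
  have Pb: "bilinear_map scale (P k)" for k unfolding P_def by (rule Tp_bil[OF u_bil])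
  have PS: "P (Suc k) = conv ?D h (P k)" for k unfolding P_def by (simp add: Tp_Suc)
  have P0: "P 0 = ?u" unfolding P_def by (simp add: Tp_0)
  have Pc: "conv ?D (P k) h = P (Suc k)" for k unfolding P_def by (rule P_comm)
  obtain N where NN: "\<And>x. tensor_eq scale (Suc (N x)) (reduced_iter scale one \<Delta> \<epsilon> (N x) x) []"
    using conn by metis
  have hv: "N x \<le> k \<Longrightarrow> P (Suc k) x y = 0" for x k y
    unfolding P_def by (rule P_vanish[OF NN])
  define g where "g x y = (\<Sum>k\<le>N x. P k x y)" for x y
  have gM: "g x y = (\<Sum>k\<le>M. P k x y)" if "N x \<le> M" for x y M
    unfolding g_def
  proof (rule sum.mono_neutral_left)
    show "\<forall>i\<in>{..M} - {..N x}. P i x y = 0"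
    proof
      fix i assume "i \<in> {..M} - {..N x}"
      then obtain j where "i = Suc j" "N x \<le> j" by (cases i) auto
      then show "P i x y = 0" using hv by simp
    qed
  qed (use that in auto)
  have gb: "bilinear_map scale g"
    unfolding bil_iff
  proof (intro conjI allI)
    fix x
    show "lin (g x)" unfolding lin_def g_def
      using lin_add[OF bilD1[OF Pb]] lin_scale[OF bilD1[OF Pb]]
      by (simp add: sum.distrib scale_sum_right)
  next
    fix y
    show "lin (\<lambda>x. g x y)" unfolding lin_def
    proof (intro conjI allI)
      fix x z c
      let ?M = "N (x + z) + N x + N z"
      show "g (x + z) y = g x y + g z y"
        using gM[of "x+z" ?M y] gM[of x ?M y] gM[of z ?M y] lin_add[OF bilD2[OF Pb]]
        by (simp add: sum.distrib)
      let ?M = "N (scale c x) + N x"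
      show "g (scale c x) y = scale c (g x y)"
        using gM[of "scale c x" ?M y] gM[of x ?M y] lin_scale[OF bilD2[OF Pb]]
        by (simp add: scale_sum_right)
    qed
  qed
  have bnd: "\<exists>M. N x \<le> M \<and> (\<forall>p\<in>set (?D x). N (p!0) \<le> M \<and> N (p!1) \<le> M)" for x
  proof (intro exI conjI ballI)
    let ?M = "N x + sum_list (map (\<lambda>p. N (p!0) + N (p!1)) (?D x))"
    show "N x \<le> ?M" by simp
    fix p assume "p \<in> set (?D x)"
    then have "N (p!0) + N (p!1) \<le> sum_list (map (\<lambda>p. N (p!0) + N (p!1)) (?D x))"
      by (rule le_sum_list_map)
    then show "N (p!0) \<le> ?M" "N (p!1) \<le> ?M" by auto
  qed
  have sub1: "conv ?D (\<lambda>x y. ?u x y - h x y) k x y = conv ?D ?u k x y - conv ?D h k x y" for k x y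
    unfolding conv_def by (simp add: sum_list_subtractf del: map_map)
  have sub2: "conv ?D k (\<lambda>x y. ?u x y - h x y) x y = conv ?D k ?u x y - conv ?D k h x y"
    if "bilinear_map scale k" for k x y
    unfolding conv_def using lin_diff[OF bilD1[OF that]] by (simp add: sum_list_subtractf del: map_map)
  have tele: "(\<Sum>k\<le>M. P k x y) - (\<Sum>k\<le>M. P (Suc k) x y) = scale (\<epsilon> x) y" if "N x \<le> M" for x y M
  proof -
    have "(\<Sum>k\<le>M. P k x y) - (\<Sum>k\<le>M. P (Suc k) x y) = (\<Sum>k\<le>M. P k x y - P (Suc k) x y)"
      by (simp add: sum_subtractf)
    also have "\<dots> = P 0 x y - P (Suc M) x y" by (rule sum_telescope)
    finally show ?thesis using hv[OF that] P0 by simp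
  qed
  show ?thesis
  proof (intro exI conjI allI)
    show "bilinear_map scale g" by (rule gb)
  next
    fix x y
    obtain M where M: "N x \<le> M" "\<forall>p\<in>set (?D x). N (p!0) \<le> M \<and> N (p!1) \<le> M" using bnd by blast
    have "conv ?D h g x y = sum_list (map (\<lambda>p. h (p!0) (\<Sum>k\<le>M. P k (p!1) y)) (?D x))"
      unfolding conv_def using M(2) gM by (auto intro!: arg_cong[where f=sum_list] map_cong)
    also have "\<dots> = sum_list (map (\<lambda>p. \<Sum>k\<le>M. h (p!0) (P k (p!1) y)) (?D x))"
      by (simp add: lin_sum[OF bilD1[OF hb]] del: map_map)
    also have "\<dots> = (\<Sum>k\<le>M. P (Suc k) x y)"
      unfolding sum_list_sum_swap PS by (simp add: conv_def)
    finally have e: "conv ?D h g x y = (\<Sum>k\<le>M. P (Suc k) x y)" .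
    show "conv ?D (\<lambda>x y. ?u x y - h x y) g x y = scale (\<epsilon> x) y"
      unfolding sub1 conv_unit_left[OF C gb] e gM[OF M(1)] using tele[OF M(1)] .
  next
    fix x y
    obtain M where M: "N x \<le> M" "\<forall>p\<in>set (?D x). N (p!0) \<le> M \<and> N (p!1) \<le> M" using bnd by blast
    have "conv ?D g h x y = sum_list (map (\<lambda>p. \<Sum>k\<le>M. P k (p!0) (h (p!1) y)) (?D x))"
      unfolding conv_def using M(2) gM by (auto intro!: arg_cong[where f=sum_list] map_cong)
    also have "\<dots> = (\<Sum>k\<le>M. conv ?D (P k) h x y)"
      unfolding sum_list_sum_swap by (simp add: conv_def)
    finally have e: "conv ?D g h x y = (\<Sum>k\<le>M. P (Suc k) x y)" unfolding Pc .
    show "conv ?D g (\<lambda>x y. ?u x y - h x y) x y = scale (\<epsilon> x) y"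
      unfolding sub2[OF gb] conv_unit_right[OF C gb] e gM[OF M(1)] using tele[OF M(1)] .
  qed
qed

end
end



context vector_space begin

lemma tri_one:
  assumes B: "bialgebra scale m one \<Delta> \<epsilon>" and tb: "bilinear_map scale tri"
    and ax2: "\<forall>x y z. tri x (tri y z) = tri (sum_list (map (\<lambda>p. m (p!0) (tri (p!1) y)) (\<Delta> x))) z"
    and ax1: "\<forall>x y z. tri x (m y z) = sum_list (map (\<lambda>p. m (tri (p!0) y) (tri (p!1) z)) (\<Delta> x))"
    and inv: "conv_invertible scale \<Delta> \<epsilon> tri"
  shows "tri one z = z"
proof -
  have C: "cstruct \<Delta> \<epsilon> one" by (rule bialg_cstruct[OF B])
  have mb: "bilinear_map scale m" and mu: "\<And>x. m one x = x" "\<And>x. m x one = x"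
    and Bo: "tensor_eq scale 2 (\<Delta> one) [[one, one]]" and eo: "\<epsilon> one = 1"
    using B unfolding bialgebra_def by blast+
  obtain \<beta> where bb: "bilinear_map scale \<beta>" and i1: "\<forall>x. conv \<Delta> tri \<beta> x = (\<lambda>y. scale (\<epsilon> x) y)"
    and i2: "\<forall>x. conv \<Delta> \<beta> tri x = (\<lambda>y. scale (\<epsilon> x) y)"
    using inv unfolding conv_invertible_def by blast
  have surj: "tri one (\<beta> one w) = w" for w
    using conv_one[OF C tb bb, of w] i1 eo by simp
  have inj: "\<beta> one (tri one w) = w" for w
    using conv_one[OF C bb tb, of w] i2 eo by simp
  have G1: "hml 2 (\<lambda>p. m (tri (p!0) one) (tri (p!1) y))" for y
    by (rule hml2) (simp_all add: lin_comp[OF bilD2[OF mb] bilD2[OF tb]] lin_comp[OF bilD1[OF mb] bilD2[OF tb]])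
  have G2: "hml 2 (\<lambda>p. m (p!0) (tri (p!1) y))" for y
    by (rule hml2) (simp_all add: bilD2[OF mb] lin_comp[OF bilD1[OF mb] bilD2[OF tb]])
  have "tri one y = m (tri one one) (tri one y)" for y
    using ax1[rule_format, of one one y] transfer[OF Bo G1[of y]] mu by simp
  then have "m (tri one one) w = w" for w using surj[of w] by metis
  then have e: "tri one one = one" using mu(2)[of "tri one one"] by simp
  have "tri one (tri one z) = tri (tri one one) z"
    using ax2[rule_format, of one one z] transfer[OF Bo G2[of one]] mu by simp
  then have "tri one (tri one z) = tri one z" using e by simp
  then show ?thesis using inj[of "tri one z"] inj[of z] by metis
qed

end

lemma cocomm_conv:
  assumes vs: "vector_space sc" and cc: "cocommutative sc \<Delta>"
    and f: "bilinear_map sc f" and g: "bilinear_map sc g"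
  shows "conv (\<lambda>x. map rev (\<Delta> x)) f g = conv \<Delta> f g"
proof (intro ext)
  interpret vector_space sc by (rule vs)
  fix x y
  have G: "hml 2 (\<lambda>p. f (p!0) (g (p!1) y))"
    by (rule hml2) (simp_all add: bilD2[OF f] lin_comp[OF bilD1[OF f] bilD2[OF g]])
  show "conv (\<lambda>x. map rev (\<Delta> x)) f g x y = conv \<Delta> f g x y"
    unfolding conv_def using transfer[OF _ G] cc by (simp add: cocommutative_def del: map_map)
qed

theorem proposition3p2:
  fixes sc :: "'k::field \<Rightarrow> 'h::ab_group_add \<Rightarrow> 'h"
    and m :: "'h \<Rightarrow> 'h \<Rightarrow> 'h" and one :: 'h
    and \<Delta> :: "'h \<Rightarrow> 'h list list" and \<epsilon> :: "'h \<Rightarrow> 'k"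
    and tri :: "'h \<Rightarrow> 'h \<Rightarrow> 'h"
  assumes "left_post_hopf sc m one \<Delta> \<epsilon> tri"
    and "cocommutative sc \<Delta> \<or> connected_coalgebra sc one \<Delta> \<epsilon>"
  shows "right_post_hopf sc (\<lambda>x y. m y x) one (\<lambda>x. map rev (\<Delta> x)) \<epsilon> (\<lambda>x y. tri y x)"
proof -
  have H: "hopf_algebra sc m one \<Delta> \<epsilon>" and M: "coalgebra_morphism2 sc \<Delta> \<epsilon> tri"
    and ax1: "\<forall>x y z. tri x (m y z) = sum_list (map (\<lambda>p. m (tri (p!0) y) (tri (p!1) z)) (\<Delta> x))"
    and ax2: "\<forall>x y z. tri x (tri y z) = tri (sum_list (map (\<lambda>p. m (p!0) (tri (p!1) y)) (\<Delta> x))) z"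
    and inv: "conv_invertible sc \<Delta> \<epsilon> (\<lambda>x y. tri x y)"
    using assms(1) unfolding left_post_hopf_def by blast+
  have B: "bialgebra sc m one \<Delta> \<epsilon>" using H by (simp add: hopf_algebra_def)
  have vs: "vector_space sc" and cm: "coproduct_map sc \<Delta>" using B by (simp_all add: bialgebra_def)
  interpret vector_space sc by (rule vs)
  have L: "\<forall>p\<in>set (\<Delta> x). length p = 2" for x using cm by (simp add: coproduct_map_def)
  have Hop: "hopf_algebra sc (\<lambda>x y. m y x) one (\<lambda>x. map rev (\<Delta> x)) \<epsilon>" by (rule hopf_op[OF H])
  have Cop: "cstruct (\<lambda>x. map rev (\<Delta> x)) \<epsilon> one"
    by (rule bialg_cstruct[of "\<lambda>x y. m y x"]) (use Hop in \<open>unfold hopf_algebra_def, blast\<close>)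
  have tb: "bilinear_map sc tri" using M by (simp add: coalgebra_morphism2_def)
  have inv': "conv_invertible sc (\<lambda>x. map rev (\<Delta> x)) \<epsilon> (\<lambda>x y. tri x y)"
    using assms(2)
  proof
    assume cc: "cocommutative sc \<Delta>"
    show ?thesis using inv unfolding conv_invertible_def
      using cocomm_conv[OF vs cc] by (metis (no_types, lifting))
  next
    assume conn: "connected_coalgebra sc one \<Delta> \<epsilon>"
    have t1: "tri one z = z" for z
      by (rule tri_one[OF B tb ax2 ax1]) (use inv in simp)
    let ?h = "\<lambda>x y. sc (\<epsilon> x) y - tri x y"
    have ub: "bilinear_map sc (\<lambda>x y. sc (\<epsilon> x) y)"
    proof -
      have l: "Vector_Spaces.linear sc (*) \<epsilon>" using Cop by (simp add: cstruct_def)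
      have a: "\<epsilon> (x + z) = \<epsilon> x + \<epsilon> z" and s: "\<epsilon> (sc c x) = c * \<epsilon> x" for x z c
        using l by (auto simp: linear_iff)
      show ?thesis unfolding bil_iff lin_def
        by (simp add: a s scale_right_distrib scale_left_distrib)
    qed
    have hb: "bilinear_map sc ?h"
      using ub tb unfolding bil_iff by (auto intro: lin_sub)
    have h1: "?h one y = 0" for y using t1 Cop by (simp add: cstruct_def)
    obtain g where gb: "bilinear_map sc g"
      and g1: "\<forall>x y. conv (\<lambda>x. map rev (\<Delta> x)) (\<lambda>x y. sc (\<epsilon> x) y - ?h x y) g x y = sc (\<epsilon> x) y"
      and g2: "\<forall>x y. conv (\<lambda>x. map rev (\<Delta> x)) g (\<lambda>x y. sc (\<epsilon> x) y - ?h x y) x y = sc (\<epsilon> x) y"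
      using conn_inverse[OF Cop cm hb h1] conn unfolding connected_coalgebra_def by blast
    show ?thesis unfolding conv_invertible_def
      using tb gb g1 g2 by (intro conjI exI[of _ g]) auto
  qed
  show ?thesis unfolding right_post_hopf_def
  proof (intro conjI allI)
    show "hopf_algebra sc (\<lambda>x y. m y x) one (\<lambda>x. map rev (\<Delta> x)) \<epsilon>" by (rule Hop)
    show "coalgebra_morphism2 sc (\<lambda>x. map rev (\<Delta> x)) \<epsilon> (\<lambda>x y. tri y x)"
      by (rule morph_op[OF M]) (use L in blast)
    show "conv_invertible sc (\<lambda>x. map rev (\<Delta> x)) \<epsilon> (\<lambda>x y. tri x y)" by (rule inv')
    fix x y z
    show "tri z (m y x) = sum_list (map (\<lambda>p. m (tri (p!1) y) (tri (p!0) x)) (map rev (\<Delta> z)))"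
      unfolding sumrev[OF L] using ax1 by simp
    show "tri z (tri y x) = tri (sum_list (map (\<lambda>p. m (p!1) (tri (p!0) y)) (map rev (\<Delta> z)))) x"
      unfolding sumrev[OF L] using ax2 by simp
  qed
qed


end
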